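(* Let $A\in\mathbb S_+$, $f\in[0,\infty)$, and let $\lambda$ be the smallest eigenvalue of $A$. Then the function $\Phi_{A,f}:[-f,\infty)\to[-\lambda,\infty)$, $\delta\mapsto H(A,f+\delta)$, is well defined, continuous, strictly monotonically increasing and bijective.
   Context: $\mathbb S$ denotes the set of real symmetric $d\times d$ matrices ($d\ge2$), $\mathbb S_+=\{A\in\mathbb S: A\ge 0\}$, $\mathbb S_1=\{B\in\mathbb S_+:\operatorname{tr}B=1\}$, and $A:B=\operatorname{tr}(A^TB)$. For $A\in\mathbb S$ and $f\in[0,\infty)$, $H(A,f)=\sup_{B\in\mathbb S_1}\bigl(-B:A+f\sqrt[d]{\det B}\bigr)$. *)

theory Defs
  imports "HOL-Analysis.Analysis"
begin

definition sym_mat :: "real^'n^'n \<Rightarrow> bool" where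
  "sym_mat A \<longleftrightarrow> transpose A = A"

definition psd :: "real^'n^'n \<Rightarrow> bool" where
  "psd A \<longleftrightarrow> sym_mat A \<and> (\<forall>x. 0 \<le> x \<bullet> (A *v x))"

definition S1 :: "(real^'n^'n) set" where
  "S1 = {B. psd B \<and> trace B = 1}"

definition frob :: "real^'n^'n \<Rightarrow> real^'n^'n \<Rightarrow> real" where
  "frob A B = trace (transpose A ** B)"

definition Hset :: "real^'n^'n \<Rightarrow> real \<Rightarrow> real set" where
  "Hset A f = (\<lambda>B. - frob B A + f * root CARD('n) (det B)) ` (S1 :: (real^'n^'n) set)"

definition H :: "real^'n^'n \<Rightarrow> real \<Rightarrow> real" where
  "H A f = Sup (Hset A f)"

definition eigenvalues :: "real^'n^'n \<Rightarrow> real set" where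
  "eigenvalues A = {l. \<exists>v. v \<noteq> 0 \<and> A *v v = l *\<^sub>R v}"

definition min_eig :: "real^'n^'n \<Rightarrow> real" where
  "min_eig A = Min (eigenvalues A)"

end

theory Submission
  imports Defs
begin


lemma sym_dot:
  fixes A :: "real^'n^'n"
  assumes "sym_mat A"
  shows "x \<bullet> (A *v y) = (A *v x) \<bullet> y"
proof -
  have "x \<bullet> (A *v y) = (x v* A) \<bullet> y" by (simp add: dot_lmul_matrix)
  also have "x v* A = transpose A *v x" by simp
  also have "\<dots> = A *v x" using assms by (simp add: sym_mat_def)
  finally show ?thesis .
qed

lemma adj_dot:
  fixes Q :: "real^'n^'n"
  shows "x \<bullet> (transpose Q *v y) = (Q *v x) \<bullet> y"
  by (metis dot_lmul_matrix inner_commute transpose_matrix_vector)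

lemma quad_zero:
  fixes a b :: real
  assumes "\<And>t. 0 \<le> 2*t*b + t^2 * a"
  shows "b = 0"
proof -
  define r where "r = 1 / (\<bar>a\<bar> + 1)"
  have r: "r > 0" "a * r < 2" unfolding r_def
    by (auto simp: field_simps)
  define t where "t = - (b * r)"
  have "0 \<le> 2*t*b + t^2 * a" by (rule assms)
  also have "\<dots> = b^2 * r * (a * r - 2)" unfolding t_def by (simp add: power2_eq_square algebra_simps)
  finally have "0 \<le> b^2 * r * (a * r - 2)" .
  moreover have "b^2 * r * (a*r - 2) \<le> 0"
    using r by (intro mult_nonneg_nonpos) auto
  ultimately have "b^2 * r * (a*r-2) = 0" by linarith
  then show ?thesis using r by auto
qed

lemma eigvec_perp:
  fixes A :: "real^'n^'n"
  assumes sym: "sym_mat A" and fin: "finite S" and card: "card S < CARD('n)"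
    and Sev: "\<forall>s\<in>S. \<exists>\<mu>. A *v s = \<mu> *\<^sub>R s"
  shows "\<exists>u. norm u = 1 \<and> (\<exists>\<mu>. A *v u = \<mu> *\<^sub>R u) \<and> (\<forall>s\<in>S. u \<bullet> s = 0)"
proof -
  have "dim S \<le> card S" using fin by (intro dim_le_card) (auto intro: span_base)
  then have dS: "dim S < DIM(real^'n)" using card by simp
  obtain x :: "real^'n" where x: "x \<noteq> 0" "\<And>y. y \<in> span S \<Longrightarrow> orthogonal x y"
    using orthogonal_to_subspace_exists[OF dS] by blast
  define V where "V = {y::real^'n. \<forall>s\<in>S. y \<bullet> s = 0}"
  define K where "K = V \<inter> sphere 0 1"
  have xV: "x \<in> V" using x unfolding V_def orthogonal_def by (auto intro: span_base)
  have Vscale: "c *\<^sub>R y \<in> V" if "y \<in> V" for y c using that unfolding V_def by auto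
  have Vadd: "y + z \<in> V" if "y \<in> V" "z \<in> V" for y z using that unfolding V_def by (auto simp: inner_add_left)
  have Vdiff: "y - z \<in> V" if "y \<in> V" "z \<in> V" for y z using that unfolding V_def by (auto simp: inner_diff_left)
  have VA: "A *v y \<in> V" if "y \<in> V" for y
  proof -
    have "(A *v y) \<bullet> s = 0" if "s \<in> S" for s
    proof -
      obtain \<mu> where "A *v s = \<mu> *\<^sub>R s" using Sev \<open>s\<in>S\<close> by blast
      then have "(A *v y) \<bullet> s = y \<bullet> (\<mu> *\<^sub>R s)" using sym_dot[OF sym, of y s] by simp
      then show ?thesis using \<open>y \<in> V\<close> \<open>s\<in>S\<close> unfolding V_def by simp
    qed
    then show ?thesis unfolding V_def by auto
  qed
  have "V = (\<Inter>s\<in>S. {y. s \<bullet> y = 0})" unfolding V_def by (auto simp: inner_commute)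
  then have "closed V" by (simp add: closed_INT closed_hyperplane)
  then have "compact K" unfolding K_def by (intro closed_Int_compact compact_sphere)
  moreover have "norm ((1 / norm x) *\<^sub>R x) = 1" using x by simp
  then have "(1 / norm x) *\<^sub>R x \<in> K" using Vscale[OF xV] unfolding K_def by simp
  then have "K \<noteq> {}" by blast
  moreover have "continuous_on K (\<lambda>y. y \<bullet> (A *v y))" by (intro continuous_intros)
  ultimately obtain u where u: "u \<in> K" and umin: "\<And>y. y \<in> K \<Longrightarrow> u \<bullet> (A *v u) \<le> y \<bullet> (A *v y)"
    using continuous_attains_inf[of K "\<lambda>y. y \<bullet> (A *v y)"] by auto
  define l where "l = u \<bullet> (A *v u)"
  have uV: "u \<in> V" and un: "norm u = 1" using u unfolding K_def by auto
  have ray: "l * (y \<bullet> y) \<le> y \<bullet> (A *v y)" if "y \<in> V" for y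
  proof (cases "y = 0")
    case True then show ?thesis by simp
  next
    case False
    define z where "z = (1 / norm y) *\<^sub>R y"
    have "z \<in> K" using False that Vscale unfolding K_def z_def by auto
    then have "l \<le> z \<bullet> (A *v z)" using umin l_def by auto
    also have "z \<bullet> (A *v z) = (y \<bullet> (A *v y)) / (norm y)^2"
      unfolding z_def by (simp add: matrix_vector_mult_scaleR power2_eq_square)
    finally have "l * (norm y)^2 \<le> y \<bullet> (A *v y)" using False by (simp add: field_simps)
    then show ?thesis by (simp add: power2_norm_eq_inner)
  qed
  define w where "w = A *v u - l *\<^sub>R u"
  have wV: "w \<in> V" unfolding w_def using VA uV Vscale Vdiff by auto
  have uu: "u \<bullet> u = 1" using un by (simp add: norm_eq_1)
  have bsym: "w \<bullet> (A *v u) = u \<bullet> (A *v w)" using sym_dot[OF sym, of w u] by (simp add: inner_commute)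
  have wweq: "w \<bullet> w = w \<bullet> (A *v u) - l * (w \<bullet> u)" unfolding w_def
    by (simp add: inner_diff_right inner_diff_left inner_commute algebra_simps)
  have key: "0 \<le> 2*t*(w \<bullet> w) + t^2 * (w \<bullet> (A *v w) - l * (w \<bullet> w))" for t
  proof -
    have "u + t *\<^sub>R w \<in> V" using uV wV Vscale Vadd by auto
    then have r: "l * ((u + t *\<^sub>R w) \<bullet> (u + t *\<^sub>R w)) \<le> (u + t *\<^sub>R w) \<bullet> (A *v (u + t *\<^sub>R w))"
      by (rule ray)
    have e1: "(u + t *\<^sub>R w) \<bullet> (A *v (u + t *\<^sub>R w)) = l + 2*t*(w \<bullet> (A *v u)) + t^2*(w \<bullet> (A *v w))"
      unfolding l_def using bsym
      by (simp add: matrix_vector_right_distrib matrix_vector_mult_scaleR inner_add_left inner_add_right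
          power2_eq_square algebra_simps)
    have e2: "(u + t *\<^sub>R w) \<bullet> (u + t *\<^sub>R w) = 1 + 2*t*(w \<bullet> u) + t^2*(w \<bullet> w)"
      using uu by (simp add: inner_add_left inner_add_right power2_eq_square algebra_simps inner_commute)
    have "2*t*(w \<bullet> w) + t^2 * (w \<bullet> (A *v w) - l * (w \<bullet> w))
        = (l + 2*t*(w \<bullet> (A *v u)) + t^2*(w \<bullet> (A *v w))) - l * (1 + 2*t*(w \<bullet> u) + t^2*(w \<bullet> w))"
      by (subst (1) wweq) (simp add: algebra_simps)
    then show ?thesis using r e1 e2 by simp
  qed
  have "w \<bullet> w = 0" by (rule quad_zero[OF key])
  then have "A *v u = l *\<^sub>R u" unfolding w_def by simp
  then show ?thesis using un uV unfolding V_def by auto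
qed


definition diagm :: "('n \<Rightarrow> real) \<Rightarrow> real^'n^'n" where
  "diagm b = (\<chi> i j. if i = j then b i else 0)"

lemma orth_eig_set:
  fixes A :: "real^'n^'n"
  assumes sym: "sym_mat A"
  shows "k \<le> CARD('n) \<Longrightarrow> \<exists>S. finite S \<and> card S = k \<and> (\<forall>s\<in>S. norm s = 1 \<and> (\<exists>\<mu>. A *v s = \<mu> *\<^sub>R s))
          \<and> (\<forall>s\<in>S. \<forall>t\<in>S. s \<noteq> t \<longrightarrow> s \<bullet> t = 0)"
proof (induction k)
  case 0
  show ?case by (intro exI[of _ "{}"]) auto
next
  case (Suc k)
  then obtain S where S: "finite S" "card S = k" "\<forall>s\<in>S. norm s = 1 \<and> (\<exists>\<mu>. A *v s = \<mu> *\<^sub>R s)"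
    "\<forall>s\<in>S. \<forall>t\<in>S. s \<noteq> t \<longrightarrow> s \<bullet> t = 0" by auto
  obtain u where u: "norm u = 1" "\<exists>\<mu>. A *v u = \<mu> *\<^sub>R u" "\<forall>s\<in>S. u \<bullet> s = 0"
    using eigvec_perp[OF sym S(1)] S Suc.prems by auto
  have "u \<notin> S" using u by (metis inner_eq_zero_iff norm_zero zero_neq_one)
  show ?case
    using S u \<open>u \<notin> S\<close> by (intro exI[of _ "insert u S"]) (auto simp: inner_commute)
qed

lemma entry_tQMQ:
  fixes P M Q :: "real^'n^'n"
  shows "(transpose P ** M ** Q) $ i $ j = column i P \<bullet> (M *v column j Q)"
proof -
  have "(transpose P ** M ** Q) $ i $ j = (\<Sum>k\<in>UNIV. \<Sum>l\<in>UNIV. P$l$i * M$l$k * Q$k$j)"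
    by (simp add: matrix_matrix_mult_def transpose_def sum_distrib_right)
  also have "\<dots> = (\<Sum>l\<in>UNIV. \<Sum>k\<in>UNIV. P$l$i * M$l$k * Q$k$j)" by (rule sum.swap)
  also have "\<dots> = column i P \<bullet> (M *v column j Q)"
    by (simp add: matrix_vector_mult_def inner_vec_def column_def sum_distrib_left mult.assoc)
  finally show ?thesis .
qed

lemma spectral:
  fixes A :: "real^'n^'n"
  assumes sym: "sym_mat A"
  shows "\<exists>(Q::real^'n^'n) d. transpose Q ** Q = mat 1 \<and> Q ** transpose Q = mat 1 \<and> transpose Q ** A ** Q = diagm d"
proof -
  obtain S where S: "finite S" "card S = CARD('n)" "\<forall>s\<in>S. norm s = 1 \<and> (\<exists>\<mu>. A *v s = \<mu> *\<^sub>R s)"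
    "\<forall>s\<in>S. \<forall>t\<in>S. s \<noteq> t \<longrightarrow> s \<bullet> t = 0"
    using orth_eig_set[OF sym, of "CARD('n)"] by auto
  obtain h where h: "bij_betw h (UNIV::'n set) S"
    using finite_same_card_bij[of "UNIV::'n set" S] S by auto
  define d where "d i = (SOME \<mu>. A *v h i = \<mu> *\<^sub>R h i)" for i
  have hS: "h i \<in> S" for i using h by (auto simp: bij_betw_def)
  have hd: "A *v h i = d i *\<^sub>R h i" for i
    unfolding d_def using S(3) hS[of i] by (metis (mono_tags, lifting) someI_ex)
  have horth: "h i \<bullet> h j = (if i = j then 1 else 0)" for i j
  proof (cases "i = j")
    case True then show ?thesis using S(3) hS[of i] by (simp add: norm_eq_1)
  next
    case False
    then have "h i \<noteq> h j" using h by (auto simp: bij_betw_def inj_on_def)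
    then show ?thesis using S(4) hS[of i] hS[of j] False by auto
  qed
  define Q :: "real^'n^'n" where "Q = (\<chi> r c. h c $ r)"
  have col: "column c Q = h c" for c unfolding Q_def column_def by (simp add: vec_eq_iff)
  have QQ: "transpose Q ** Q = mat 1"
  proof -
    have "(transpose Q ** mat 1 ** Q) $ i $ j = mat 1 $ i $ j" for i j
      unfolding entry_tQMQ col matrix_vector_mul_lid using horth by (simp add: mat_def)
    then show ?thesis by (simp add: vec_eq_iff)
  qed
  have QQ2: "Q ** transpose Q = mat 1" using QQ matrix_left_right_inverse by blast
  have "(transpose Q ** A ** Q) $ i $ j = diagm d $ i $ j" for i j
    unfolding entry_tQMQ col hd using horth by (simp add: diagm_def)
  then have "transpose Q ** A ** Q = diagm d" by (simp add: vec_eq_iff)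
  with QQ QQ2 show ?thesis by (intro exI[of _ Q] exI[of _ d]) simp
qed




lemma mult_diagm_entry: "(M ** diagm d) $ i $ j = M$i$j * d j"
proof -
  have "(M ** diagm d) $ i $ j = (\<Sum>k\<in>UNIV. M$i$k * (if k = j then d k else 0))"
    by (simp add: matrix_matrix_mult_def diagm_def)
  also have "\<dots> = (\<Sum>k\<in>UNIV. if k = j then M$i$k * d k else 0)"
    by (rule sum.cong) auto
  also have "\<dots> = M$i$j * d j" by simp
  finally show ?thesis .
qed

lemma diagm_mult_vec: "diagm b *v y = (\<chi> i. b i * y$i)"
proof -
  have "(diagm b *v y) $ i = b i * y$i" for i
  proof -
    have "(diagm b *v y) $ i = (\<Sum>k\<in>UNIV. (if i = k then b i else 0) * y$k)"
      by (simp add: matrix_vector_mult_def diagm_def)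
    also have "\<dots> = (\<Sum>k\<in>UNIV. if k = i then b i * y$k else 0)"
      by (rule sum.cong) auto
    also have "\<dots> = b i * y$i" by simp
    finally show ?thesis .
  qed
  then show ?thesis by (simp add: vec_eq_iff)
qed

lemma trace_diagm: "trace (M ** diagm d) = (\<Sum>i\<in>UNIV. M$i$i * d i)"
  by (simp add: trace_def mult_diagm_entry)

lemma transpose_diagm: "transpose (diagm d) = diagm d"
  by (simp add: vec_eq_iff transpose_def diagm_def)

lemma det_diagm: "det (diagm d) = (\<Prod>i\<in>UNIV. d i)"
  by (subst det_diagonal) (auto simp: diagm_def)

lemma psd_conj_diag_nonneg:
  fixes B Q :: "real^'n^'n"
  assumes "psd B"
  shows "(transpose Q ** B ** Q) $ i $ i \<ge> 0"
  using assms unfolding entry_tQMQ psd_def by auto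

lemma A_decomp:
  fixes A Q :: "real^'n^'n"
  assumes "Q ** transpose Q = mat 1" "transpose Q ** A ** Q = diagm d"
  shows "A = Q ** diagm d ** transpose Q"
proof -
  have "Q ** diagm d ** transpose Q = Q ** (transpose Q ** A ** Q) ** transpose Q" using assms(2) by simp
  also have "\<dots> = (Q ** transpose Q) ** A ** (Q ** transpose Q)" by (simp add: matrix_mul_assoc)
  also have "\<dots> = A" using assms(1) by simp
  finally show ?thesis by simp
qed
lemma frob_lower:
  fixes A B Q :: "real^'n^'n"
  assumes QQ: "transpose Q ** Q = mat 1" "Q ** transpose Q = mat 1"
    and QA: "transpose Q ** A ** Q = diagm d"
    and dl: "\<And>i. l \<le> d i" and B: "psd B" "trace B = 1"
  shows "l \<le> frob B A"
proof -
  define M where "M = transpose Q ** B ** Q"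
  have sB: "transpose B = B" using B by (simp add: psd_def sym_mat_def)
  have "frob B A = trace (B ** (Q ** diagm d ** transpose Q))"
    unfolding frob_def sB using A_decomp[OF QQ(2) QA] by simp
  also have "\<dots> = trace ((B ** Q ** diagm d) ** transpose Q)" by (simp add: matrix_mul_assoc)
  also have "\<dots> = trace (transpose Q ** (B ** Q ** diagm d))" by (rule trace_mul_sym)
  also have "\<dots> = trace (M ** diagm d)" unfolding M_def by (simp add: matrix_mul_assoc)
  also have "\<dots> = (\<Sum>i\<in>UNIV. M$i$i * d i)" by (rule trace_diagm)
  finally have f: "frob B A = (\<Sum>i\<in>UNIV. M$i$i * d i)" .
  have "trace M = trace (transpose Q ** (B ** Q))" unfolding M_def by (simp add: matrix_mul_assoc)
  also have "\<dots> = trace ((B ** Q) ** transpose Q)" by (rule trace_mul_sym)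
  also have "\<dots> = 1" using QQ(2) B by (simp add: matrix_mul_assoc[symmetric])
  finally have tM: "(\<Sum>i\<in>UNIV. M$i$i) = 1" by (simp add: trace_def)
  have "l = (\<Sum>i\<in>UNIV. M$i$i * l)" using tM by (simp add: sum_distrib_right[symmetric])
  also have "\<dots> \<le> (\<Sum>i\<in>UNIV. M$i$i * d i)"
    using psd_conj_diag_nonneg[OF B(1)] dl unfolding M_def by (intro sum_mono mult_left_mono) auto
  finally show ?thesis using f by simp
qed

lemma det_conj:
  fixes B Q :: "real^'n^'n"
  assumes "transpose Q ** Q = mat 1"
  shows "det (transpose Q ** B ** Q) = det B"
proof -
  have "det (transpose Q) * det Q = 1" using assms det_mul[of "transpose Q" Q] by simp
  then show ?thesis by (simp add: det_mul)
qed

lemma psd_det_nonneg: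
  fixes B :: "real^'n^'n"
  assumes "psd B"
  shows "0 \<le> det B"
proof -
  obtain Q :: "real^'n^'n" and c where Q: "transpose Q ** Q = mat 1" "transpose Q ** B ** Q = diagm c"
    using spectral[of B] assms unfolding psd_def by blast
  have "det B = det (diagm c)" using det_conj[OF Q(1), of B] Q(2) by simp
  also have "\<dots> = (\<Prod>i\<in>UNIV. c i)" by (rule det_diagm)
  finally have "det B = (\<Prod>i\<in>UNIV. c i)" .
  moreover have "c i \<ge> 0" for i
    using psd_conj_diag_nonneg[OF assms, of Q i] Q(2) by (simp add: diagm_def)
  ultimately show ?thesis by (simp add: prod_nonneg)
qed

lemma construct:
  fixes A Q :: "real^'n^'n"
  assumes QQ: "transpose Q ** Q = mat 1" "Q ** transpose Q = mat 1"
    and QA: "transpose Q ** A ** Q = diagm d"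
    and b: "\<And>i. 0 \<le> b i" "(\<Sum>i\<in>UNIV. b i) = 1"
  defines "B \<equiv> Q ** diagm b ** transpose Q"
  shows "B \<in> S1" "frob B A = (\<Sum>i\<in>UNIV. b i * d i)" "det B = (\<Prod>i\<in>UNIV. b i)"
proof -
  have sB: "transpose B = B" unfolding B_def
    by (simp add: matrix_transpose_mul transpose_diagm matrix_mul_assoc)
  have q: "x \<bullet> (B *v x) \<ge> 0" for x
  proof -
    define y where "y = transpose Q *v x"
    have "x \<bullet> (B *v x) = x \<bullet> (Q *v (diagm b *v y))"
      unfolding B_def y_def by (simp add: matrix_vector_mul_assoc matrix_mul_assoc del: transpose_matrix_vector)
    also have "\<dots> = y \<bullet> (diagm b *v y)"
      using adj_dot[of x "transpose Q" "diagm b *v y"] unfolding y_def by (simp del: transpose_matrix_vector)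
    also have "\<dots> = (\<Sum>i\<in>UNIV. b i * (y$i)^2)"
      by (simp add: diagm_mult_vec inner_vec_def power2_eq_square mult_ac)
    also have "\<dots> \<ge> 0" using b by (intro sum_nonneg) auto
    finally show ?thesis .
  qed
  have "trace B = trace ((Q ** diagm b) ** transpose Q)" unfolding B_def by simp
  also have "\<dots> = trace (transpose Q ** (Q ** diagm b))" by (rule trace_mul_sym)
  also have "\<dots> = trace ((transpose Q ** Q) ** diagm b)" by (simp only: matrix_mul_assoc)
  also have "\<dots> = trace (diagm b)" using QQ(1) by simp
  also have "\<dots> = 1" using b by (simp add: trace_def diagm_def)
  finally show "B \<in> S1" unfolding S1_def psd_def sym_mat_def using sB q by auto
  have "frob B A = trace (B ** A)" unfolding frob_def sB by simp
  also have "B ** A = Q ** (diagm b ** transpose Q ** A)" unfolding B_def by (simp add: matrix_mul_assoc)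
  also have "trace \<dots> = trace ((diagm b ** transpose Q ** A) ** Q)" by (rule trace_mul_sym)
  also have "(diagm b ** transpose Q ** A) ** Q = diagm b ** (transpose Q ** A ** Q)" by (simp add: matrix_mul_assoc)
  also have "\<dots> = diagm b ** diagm d" using QA by simp
  also have "trace \<dots> = (\<Sum>i\<in>UNIV. b i * d i)" unfolding trace_diagm by (simp add: diagm_def)
  finally show "frob B A = (\<Sum>i\<in>UNIV. b i * d i)" .
  have "det (transpose Q) * det Q = 1" using QQ(1) det_mul[of "transpose Q" Q] by simp
  then have "det B = det (diagm b)" unfolding B_def by (simp add: det_mul)
  then show "det B = (\<Prod>i\<in>UNIV. b i)" using det_diagm by simp
qed

lemma psd_entry_bound:
  fixes B :: "real^'n^'n"
  assumes "psd B" "trace B = 1"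
  shows "\<bar>B$i$j\<bar> \<le> 1"
proof -
  define e where "e k = (axis k 1 :: real^'n)" for k
  have ent: "e k \<bullet> (B *v e m) = B$k$m" for k m
    unfolding e_def matrix_vector_mult_basis by (simp add: inner_axis' column_def)
  have sB: "B$k$m = B$m$k" for k m using assms(1) unfolding psd_def sym_mat_def
    by (metis transpose_def vec_lambda_beta)
  have q: "0 \<le> x \<bullet> (B *v x)" for x using assms(1) by (simp add: psd_def)
  have diag: "0 \<le> B$k$k" for k using q[of "e k"] ent by simp
  have "(\<Sum>k\<in>UNIV. B$k$k) = 1" using assms(2) by (simp add: trace_def)
  then have diag1: "B$k$k \<le> 1" for k
    using member_le_sum[of k UNIV "\<lambda>k. B$k$k"] diag by auto
  have p: "0 \<le> (e i + e j) \<bullet> (B *v (e i + e j))" by (rule q)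
  have m: "0 \<le> (e i - e j) \<bullet> (B *v (e i - e j))" by (rule q)
  have p': "0 \<le> B$i$i + B$j$j + 2 * B$i$j"
    using p by (simp add: matrix_vector_right_distrib inner_add_left inner_add_right ent sB[of j i])
  have m': "0 \<le> B$i$i + B$j$j - 2 * B$i$j"
    using m by (simp add: matrix_vector_mult_diff_distrib inner_diff_left inner_diff_right ent sB[of j i])
  show ?thesis using p' m' diag1[of i] diag1[of j] by linarith
qed

lemma det_bound:
  fixes B :: "real^'n^'n"
  assumes "\<And>i j. \<bar>B$i$j\<bar> \<le> 1"
  shows "\<bar>det B\<bar> \<le> fact CARD('n)"
proof -
  have "\<bar>det B\<bar> \<le> (\<Sum>p\<in>{p. p permutes (UNIV::'n set)}. \<bar>of_int (sign p) * (\<Prod>i\<in>UNIV. B$i$p i)\<bar>)"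
    unfolding det_def by (rule sum_abs)
  also have "\<dots> \<le> (\<Sum>p\<in>{p. p permutes (UNIV::'n set)}. 1)"
  proof (rule sum_mono)
    fix p :: "'n \<Rightarrow> 'n"
    have "\<bar>of_int (sign p) :: real\<bar> = 1" by (cases rule: sign_cases[of p]) auto
    moreover have "\<bar>\<Prod>i\<in>UNIV. B$i$p i\<bar> \<le> 1"
      unfolding abs_prod using assms by (intro prod_le_1) auto
    ultimately show "\<bar>of_int (sign p) * (\<Prod>i\<in>UNIV. B$i$p i)\<bar> \<le> 1" by (simp add: abs_mult)
  qed
  also have "\<dots> = fact CARD('n)" using card_permutations[of "UNIV::'n set" "CARD('n)"] by simp
  finally show ?thesis .
qed



lemma eig_range:
  fixes A Q :: "real^'n^'n"
  assumes QQ: "transpose Q ** Q = mat 1" "Q ** transpose Q = mat 1"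
    and QA: "transpose Q ** A ** Q = diagm d"
  shows "eigenvalues A = range d"
proof
  have AQ: "A ** Q = Q ** diagm d"
  proof -
    have "A ** Q = Q ** diagm d ** transpose Q ** Q" using A_decomp[OF QQ(2) QA] by simp
    also have "\<dots> = Q ** diagm d ** (transpose Q ** Q)" by (simp only: matrix_mul_assoc)
    finally show ?thesis using QQ(1) by simp
  qed
  show "range d \<subseteq> eigenvalues A"
  proof
    fix x assume "x \<in> range d"
    then obtain i where i: "x = d i" by auto
    define v where "v = Q *v axis i 1"
    have "transpose Q *v v = axis i 1" unfolding v_def
      by (simp add: matrix_vector_mul_assoc QQ(1) del: transpose_matrix_vector)
    then have "v \<noteq> 0" by (auto simp: axis_eq_0_iff)
    moreover have "A *v v = d i *\<^sub>R v"
    proof -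
      have "A *v v = Q *v (diagm d *v axis i 1)" unfolding v_def
        by (simp add: matrix_vector_mul_assoc AQ)
      also have "diagm d *v axis i 1 = d i *\<^sub>R axis i (1::real)"
        by (simp add: diagm_mult_vec vec_eq_iff axis_def)
      finally show ?thesis unfolding v_def by (simp add: matrix_vector_mult_scaleR)
    qed
    ultimately show "x \<in> eigenvalues A" unfolding eigenvalues_def i by blast
  qed
  show "eigenvalues A \<subseteq> range d"
  proof
    fix \<mu> assume "\<mu> \<in> eigenvalues A"
    then obtain v where v: "v \<noteq> 0" "A *v v = \<mu> *\<^sub>R v" unfolding eigenvalues_def by auto
    define w where "w = transpose Q *v v"
    have Qw: "Q *v w = v" unfolding w_def
      by (simp add: matrix_vector_mul_assoc QQ(2) del: transpose_matrix_vector)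
    then have "w \<noteq> 0" using v by auto
    then obtain i where wi: "w $ i \<noteq> 0" by (auto simp: vec_eq_iff)
    have "diagm d *v w = transpose Q *v (A *v (Q *v w))"
      using QA by (simp add: matrix_vector_mul_assoc matrix_mul_assoc del: transpose_matrix_vector)
    also have "\<dots> = transpose Q *v (\<mu> *\<^sub>R v)" by (simp only: Qw v(2))
    also have "\<dots> = \<mu> *\<^sub>R w" unfolding w_def by (simp add: matrix_vector_mult_scaleR del: transpose_matrix_vector)
    finally have "d i * w $ i = \<mu> * w $ i" by (simp add: diagm_mult_vec vec_eq_iff)
    then have "\<mu> = d i" using wi by simp
    then show "\<mu> \<in> range d" by simp
  qed
qed


locale hsetup =
  fixes A Q :: "real^'n^'n" and d :: "'n \<Rightarrow> real" and l :: real and i0 :: 'n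
  assumes QQ1: "transpose Q ** Q = mat 1" and QQ2: "Q ** transpose Q = mat 1"
    and QA: "transpose Q ** A ** Q = diagm d"
    and dl: "\<And>i. l \<le> d i" and di0: "d i0 = l"
    and n2: "CARD('n) \<ge> 2"
begin

definition val :: "real \<Rightarrow> real^'n^'n \<Rightarrow> real" where
  "val g B = - frob B A + g * root CARD('n) (det B)"

definition M0 :: real where "M0 = root CARD('n) (fact CARD('n))"

lemma Hset_eq: "Hset A g = val g ` S1"
  unfolding Hset_def val_def by simp

lemma root_bounds:
  fixes B :: "real^'n^'n"
  assumes "B \<in> S1"
  shows "0 \<le> root CARD('n) (det B)" "root CARD('n) (det B) \<le> M0"
proof -
  have B: "psd B" "trace B = 1" using assms by (auto simp: S1_def)
  show "0 \<le> root CARD('n) (det B)" using psd_det_nonneg[OF B(1)] by (simp add: real_root_ge_zero)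
  have "\<bar>det B\<bar> \<le> fact CARD('n)" using psd_entry_bound[OF B] by (intro det_bound) auto
  then have "det B \<le> fact CARD('n)" by linarith
  then show "root CARD('n) (det B) \<le> M0" unfolding M0_def by simp
qed

lemma M0_nonneg: "0 \<le> M0"
  unfolding M0_def by (simp add: real_root_ge_zero)

lemma frob_ge: "(B::real^'n^'n) \<in> S1 \<Longrightarrow> l \<le> frob B A"
  using frob_lower[OF QQ1 QQ2 QA dl] by (auto simp: S1_def)

definition B0 :: "real^'n^'n" where
  "B0 = Q ** diagm (\<lambda>i. if i = i0 then 1 else 0) ** transpose Q"

lemma B0: "B0 \<in> S1" "frob B0 A = l"
proof -
  have s: "(\<Sum>i\<in>UNIV. (if i = i0 then 1 else 0::real)) = 1" by simp
  show "B0 \<in> S1" unfolding B0_def by (rule construct(1)[OF QQ1 QQ2 QA _ s]) auto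
  have "frob B0 A = (\<Sum>i\<in>UNIV. (if i = i0 then 1 else 0) * d i)"
    unfolding B0_def by (rule construct(2)[OF QQ1 QQ2 QA _ s]) auto
  also have "\<dots> = (\<Sum>i\<in>UNIV. if i = i0 then d i else 0)" by (rule sum.cong) auto
  also have "\<dots> = l" using di0 by simp
  finally show "frob B0 A = l" .
qed

lemma val_ub: "0 \<le> g \<Longrightarrow> (B::real^'n^'n) \<in> S1 \<Longrightarrow> val g B \<le> - l + g * M0"
  unfolding val_def using frob_ge root_bounds by (smt (verit) mult_left_mono)

lemma bdd: "0 \<le> g \<Longrightarrow> bdd_above (Hset A g)"
  unfolding Hset_eq bdd_above_def using val_ub by blast

lemma ne: "Hset A g \<noteq> {}"
  unfolding Hset_eq using B0 by blast

lemma H_ge: "0 \<le> g \<Longrightarrow> (B::real^'n^'n) \<in> S1 \<Longrightarrow> val g B \<le> H A g"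
  unfolding H_def using bdd by (intro cSup_upper) (auto simp: Hset_eq)

lemma H_le: "(\<And>B::real^'n^'n. B \<in> S1 \<Longrightarrow> val g B \<le> c) \<Longrightarrow> H A g \<le> c"
  unfolding H_def using ne by (intro cSup_least) (auto simp: Hset_eq)

lemma H_low: "0 \<le> g \<Longrightarrow> - l \<le> H A g"
proof -
  assume g: "0 \<le> g"
  have "- l \<le> val g B0" unfolding val_def using B0 root_bounds(1)[OF B0(1)] g by simp
  also have "\<dots> \<le> H A g" using H_ge[OF g B0(1)] .
  finally show ?thesis .
qed

lemma H0: "H A 0 = - l"
proof (rule antisym)
  show "H A 0 \<le> - l" by (rule H_le) (use frob_ge in \<open>auto simp: val_def\<close>)
  show "- l \<le> H A 0" by (rule H_low) simp
qed

lemma H_mono: "0 \<le> g1 \<Longrightarrow> g1 \<le> g2 \<Longrightarrow> H A g1 \<le> H A g2"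
proof (rule H_le)
  fix B :: "real^'n^'n" assume "0 \<le> g1" "g1 \<le> g2" "B \<in> S1"
  then have "val g1 B \<le> val g2 B" unfolding val_def using root_bounds(1)[of B]
    by (simp add: mult_right_mono)
  also have "\<dots> \<le> H A g2" using H_ge \<open>0 \<le> g1\<close> \<open>g1 \<le> g2\<close> \<open>B \<in> S1\<close> by simp
  finally show "val g1 B \<le> H A g2" .
qed

lemma H_lip: "0 \<le> g1 \<Longrightarrow> g1 \<le> g2 \<Longrightarrow> H A g2 \<le> H A g1 + (g2 - g1) * M0"
proof (rule H_le)
  fix B :: "real^'n^'n" assume g: "0 \<le> g1" "g1 \<le> g2" and B: "B \<in> S1"
  have "val g2 B = val g1 B + (g2 - g1) * root CARD('n) (det B)" unfolding val_def by (simp add: algebra_simps)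
  also have "\<dots> \<le> H A g1 + (g2 - g1) * M0"
    using H_ge[OF g(1) B] root_bounds(2)[OF B] g by (intro add_mono mult_left_mono) auto
  finally show "val g2 B \<le> H A g1 + (g2 - g1) * M0" .
qed

lemma H_conv:
  assumes "0 \<le> a" "0 \<le> b" "0 \<le> \<theta>" "\<theta> \<le> 1"
  shows "H A (\<theta> * a + (1 - \<theta>) * b) \<le> \<theta> * H A a + (1 - \<theta>) * H A b"
proof (rule H_le)
  fix B :: "real^'n^'n" assume B: "B \<in> S1"
  have "val (\<theta> * a + (1 - \<theta>) * b) B = \<theta> * val a B + (1 - \<theta>) * val b B"
    unfolding val_def by (simp add: algebra_simps)
  also have "\<dots> \<le> \<theta> * H A a + (1 - \<theta>) * H A b"
    using H_ge[OF assms(1) B] H_ge[OF assms(2) B] assms by (intro add_mono mult_left_mono) auto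
  finally show "val (\<theta> * a + (1 - \<theta>) * b) B \<le> \<theta> * H A a + (1 - \<theta>) * H A b" .
qed


lemma H_pos:
  assumes g: "0 < g"
  shows "- l < H A g"
proof -
  define n where "n = CARD('n)"
  have n1: "2 \<le> n" using n2 n_def by simp
  define K where "K = (\<Sum>i\<in>UNIV. d i - l)"
  have K0: "0 \<le> K" using dl unfolding K_def by (intro sum_nonneg) auto
  have gn: "0 < g^n" using g by simp
  have Kn: "0 \<le> K^n" using K0 by simp
  define t where "t = min (1/(2*real n)) (g^n / (2*(2*K^n+1)))"
  have t0: "0 < t" using gn Kn n1 unfolding t_def by (auto simp: min_def)
  have "t \<le> 1/(2*real n)" unfolding t_def by simp
  then have t1: "real n * t \<le> 1/2" using n1 by (simp add: field_simps)
  have t2: "2 * K^n * t < g^n"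
  proof -
    have "t \<le> g^n / (2*(2*K^n+1))" unfolding t_def by simp
    then have "2 * K^n * t \<le> 2 * K^n * (g^n / (2*(2*K^n+1)))" using Kn by (intro mult_left_mono) auto
    also have "\<dots> = K^n * g^n / (2*K^n+1)" using Kn by (simp add: field_simps)
    also have "\<dots> < g^n"
    proof -
      have h: "0 \<le> K^n * g^n" using Kn gn by simp
      have "0 < g^n + K^n * g^n" using h gn by linarith
      then show ?thesis using gn Kn by (simp add: field_simps)
    qed
    finally show ?thesis .
  qed
  define b where "b i = t + (if i = i0 then 1 - real n * t else 0)" for i
  have b0: "0 \<le> b i" for i using t0 t1 by (simp add: b_def)
  have bs: "(\<Sum>i\<in>UNIV. b i) = 1" by (simp add: b_def sum.distrib n_def)
  define B where "B = Q ** diagm b ** transpose Q"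
  have BS: "B \<in> S1" and fB: "frob B A = (\<Sum>i\<in>UNIV. b i * d i)" and dB: "det B = (\<Prod>i\<in>UNIV. b i)"
    unfolding B_def using construct[OF QQ1 QQ2 QA b0 bs] by auto
  have "(\<Sum>i\<in>UNIV. b i * d i)
      = (\<Sum>i\<in>UNIV. b i * l + t * (d i - l) + (if i = i0 then (1 - real n * t) * (d i - l) else 0))"
    by (rule sum.cong) (auto simp: b_def algebra_simps)
  also have "\<dots> = (\<Sum>i\<in>UNIV. b i) * l + t * K + (1 - real n * t) * (d i0 - l)"
    by (simp add: sum.distrib sum_distrib_left sum_distrib_right K_def)
  also have "\<dots> = l + t * K" using bs di0 by simp
  finally have fB2: "frob B A = l + t * K" using fB by simp
  have bi0: "b i0 \<ge> 1/2" using t0 t1 by (simp add: b_def)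
  have "(\<Prod>i\<in>UNIV. b i) = b i0 * (\<Prod>i\<in>UNIV-{i0}. b i)" by (simp add: prod.remove)
  also have "(\<Prod>i\<in>UNIV-{i0}. b i) = (\<Prod>i\<in>UNIV-{i0}. t)" by (rule prod.cong) (auto simp: b_def)
  also have "\<dots> = t^(n-1)" by (simp add: n_def card_Diff_singleton)
  finally have dB2: "det B = b i0 * t^(n-1)" using dB by simp
  have tpos: "0 < t^(n-1)" using t0 by simp
  have dBge: "t^(n-1) / 2 \<le> det B" unfolding dB2 using bi0 tpos by (simp add: field_simps)
  have dBpos: "0 < det B" using dBge tpos by linarith
  define r where "r = root n (det B)"
  have r0: "0 < r" unfolding r_def using dBpos n1 by (simp add: real_root_gt_zero)
  have "(t * K)^n = K^n * t * t^(n-1)"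
  proof -
    have "t^n = t * t^(n-1)" using n1 by (simp add: power_eq_if)
    then show ?thesis by (simp add: power_mult_distrib)
  qed
  also have "\<dots> = (2 * K^n * t) * (t^(n-1) / 2)" by simp
  also have "\<dots> < g^n * (t^(n-1) / 2)" using t2 tpos by (intro mult_strict_right_mono) auto
  also have "\<dots> \<le> g^n * det B" using dBge gn by (intro mult_left_mono) auto
  also have "\<dots> = (g * r)^n"
  proof -
    have "r^n = det B" unfolding r_def using n1 dBpos by (intro real_root_pow_pos2) auto
    then show ?thesis by (simp add: power_mult_distrib)
  qed
  finally have "(t * K)^n < (g * r)^n" .
  moreover have "0 \<le> g * r" using g r0 by simp
  ultimately have tK: "t * K < g * r" by (rule power_less_imp_less_base)
  have "val g B = - (l + t * K) + g * r" unfolding val_def fB2 r_def n_def by simp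
  then have "- l < val g B" using tK by simp
  also have "\<dots> \<le> H A g" using H_ge g BS by simp
  finally show ?thesis .
qed

lemma H_big:
  assumes g: "0 \<le> g"
  shows "- (\<Sum>i\<in>UNIV. d i) / CARD('n) + g / CARD('n) \<le> H A g"
proof -
  define n where "n = CARD('n)"
  have n0: "0 < n" by (simp add: n_def)
  define b where "b i = 1 / real n" for i :: 'n
  have b0: "0 \<le> b i" for i by (simp add: b_def)
  have bs: "(\<Sum>i\<in>UNIV. b i) = 1" using n0 by (simp add: b_def n_def)
  define B where "B = Q ** diagm b ** transpose Q"
  have BS: "B \<in> S1" and fB: "frob B A = (\<Sum>i\<in>UNIV. b i * d i)" and dB: "det B = (\<Prod>i\<in>UNIV. b i)"
    unfolding B_def using construct[OF QQ1 QQ2 QA b0 bs] by auto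
  have "frob B A = (\<Sum>i\<in>UNIV. d i) / n" unfolding fB b_def by (simp add: sum_divide_distrib)
  moreover have "det B = (1 / real n) ^ n" unfolding dB b_def by (simp add: n_def)
  then have "root n (det B) = 1 / real n" using n0 by (simp add: real_root_power_cancel)
  ultimately have "val g B = - (\<Sum>i\<in>UNIV. d i) / n + g / n" unfolding val_def n_def by simp
  then show ?thesis using H_ge[OF g BS] n_def by simp
qed

lemma H_strict:
  assumes g1: "0 \<le> g1" and lt: "g1 < g2"
  shows "H A g1 < H A g2"
proof (rule ccontr)
  assume "\<not> H A g1 < H A g2"
  then have eq: "H A g2 = H A g1" using H_mono[OF g1, of g2] lt by simp
  show False
  proof (cases "g1 = 0")
    case True
    then show False using eq H0 H_pos[of g2] lt by simp
  next
    case False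
    then have g1p: "0 < g1" using g1 by simp
    define \<theta> where "\<theta> = 1 - g1 / g2"
    have g2p: "0 < g2" using g1p lt by simp
    have th: "0 < \<theta>" "\<theta> \<le> 1" using g1p lt g2p by (auto simp: \<theta>_def field_simps)
    have "\<theta> * 0 + (1 - \<theta>) * g2 = g1" using g2p by (simp add: \<theta>_def)
    then have "H A g1 \<le> \<theta> * H A 0 + (1 - \<theta>) * H A g2"
      using H_conv[of 0 g2 \<theta>] g2p th by simp
    then have "\<theta> * H A g1 \<le> \<theta> * (- l)" using eq H0 by (simp add: algebra_simps)
    then have "H A g1 \<le> - l" using th(1) by (rule mult_left_le_imp_le)
    then show False using H_pos[OF g1p] by simp
  qed
qed

end


theorem lemma3p4:
  fixes A :: "real^'n^'n" and f :: real
  assumes "CARD('n) \<ge> 2"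
    and "psd A"
    and "f \<ge> 0"
  defines "\<Phi> \<equiv> (\<lambda>\<delta>. H A (f + \<delta>))"
  shows "(\<forall>\<delta>\<ge>-f. bdd_above (Hset A (f + \<delta>)))
    \<and> \<Phi> ` {-f..} \<subseteq> {- min_eig A..}
    \<and> continuous_on {-f..} \<Phi>
    \<and> strict_mono_on {-f..} \<Phi>
    \<and> bij_betw \<Phi> {-f..} {- min_eig A..}"
proof -
  have symA: "sym_mat A" using assms(2) by (simp add: psd_def)
  obtain Q :: "real^'n^'n" and d where QQ1: "transpose Q ** Q = mat 1" and QQ2: "Q ** transpose Q = mat 1"
    and QA: "transpose Q ** A ** Q = diagm d"
    using spectral[OF symA] by blast
  have ev: "eigenvalues A = range d" by (rule eig_range[OF QQ1 QQ2 QA])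
  define l where "l = min_eig A"
  have lmem: "l \<in> range d" unfolding l_def min_eig_def ev by (intro Min_in) auto
  then obtain i0 where di0: "d i0 = l" by auto
  have dl: "l \<le> d i" for i unfolding l_def min_eig_def ev by (intro Min_le) auto
  interpret hs: hsetup A Q d l i0
    using QQ1 QQ2 QA dl di0 assms(1) by unfold_locales auto
  have Phi: "\<Phi> x = H A (f + x)" for x unfolding assms(4) by simp
  have P1: "\<forall>\<delta>\<ge>-f. bdd_above (Hset A (f + \<delta>))" using hs.bdd by auto
  have P2: "\<Phi> ` {-f..} \<subseteq> {- l..}" using hs.H_low by (auto simp: Phi)
  have P3: "continuous_on {-f..} \<Phi>"
  proof (rule lipschitz_on_continuous_on)
    show "hs.M0-lipschitz_on {-f..} \<Phi>"
    proof (rule lipschitz_onI)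
      show "0 \<le> hs.M0" by (rule hs.M0_nonneg)
      fix x y assume x: "x \<in> {-f..}" and y: "y \<in> {-f..}"
      have L: "\<bar>\<Phi> a - \<Phi> b\<bar> \<le> hs.M0 * \<bar>a - b\<bar>" if "-f \<le> a" "a \<le> b" for a b
      proof -
        have "H A (f + a) \<le> H A (f + b)" using hs.H_mono that by simp
        moreover have "H A (f + b) \<le> H A (f + a) + ((f + b) - (f + a)) * hs.M0"
          using hs.H_lip[of "f + a" "f + b"] that by simp
        ultimately show ?thesis using that by (simp add: Phi abs_if algebra_simps)
      qed
      show "dist (\<Phi> x) (\<Phi> y) \<le> hs.M0 * dist x y"
      proof (cases "x \<le> y")
        case True then show ?thesis using L[of x y] x by (simp add: dist_real_def)
      next
        case False then show ?thesis using L[of y x] y by (simp add: dist_real_def abs_minus_commute)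
      qed
    qed
  qed
  have P4: "strict_mono_on {-f..} \<Phi>"
    unfolding strict_mono_on_def Phi using hs.H_strict by auto
  have P5: "\<Phi> ` {-f..} = {- l..}"
  proof
    show "\<Phi> ` {-f..} \<subseteq> {- l..}" by (rule P2)
    show "{- l..} \<subseteq> \<Phi> ` {-f..}"
    proof
      fix y assume y: "y \<in> {- l..}"
      define c0 where "c0 = (\<Sum>i\<in>UNIV. d i)"
      define n where "n = real CARD('n)"
      have n0: "0 < n" by (simp add: n_def)
      define g where "g = max 0 (n * y + c0)"
      have g0: "0 \<le> g" by (simp add: g_def)
      have "y \<le> - c0 / n + g / n"
      proof -
        have "n * y + c0 \<le> g" by (simp add: g_def)
        then have "(n * y + c0) / n \<le> g / n" using n0 by (simp add: divide_right_mono)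
        moreover have "y = (n * y + c0) / n - c0 / n" using n0 by (simp add: field_simps)
        ultimately show ?thesis by linarith
      qed
      also have "\<dots> \<le> H A g" using hs.H_big[OF g0] by (simp add: c0_def n_def)
      finally have yb: "y \<le> \<Phi> (g - f)" by (simp add: Phi)
      have ya: "\<Phi> (-f) \<le> y" using y hs.H0 by (simp add: Phi)
      have "continuous_on {-f..g-f} \<Phi>" using P3 by (rule continuous_on_subset) auto
      then obtain x where "-f \<le> x" "x \<le> g - f" "\<Phi> x = y"
        using IVT'[of \<Phi> "-f" y "g - f", OF ya yb] g0 by auto
      then show "y \<in> \<Phi> ` {-f..}" by auto
    qed
  qed
  have P6: "bij_betw \<Phi> {-f..} {- min_eig A..}"
    unfolding bij_betw_def using strict_mono_on_imp_inj_on[OF P4] P5 l_def by simp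
  show ?thesis using P1 P2 P3 P4 P6 l_def by simp
qed

end
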